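(* For all integers $N\ge2$ and all $s\in(\frac12,1)$, setting $\gamma:=1+\frac2{N-2s}$, there exists a sequence of functions $U_n\in C^\infty_c(\mathbb{R}^N\times(0,+\infty),[0,1])$ such that $$\lim_{n\to+\infty}\frac{\Big(\int_{\mathbb{R}^N\times(0,+\infty)}y^{1-2s}|U_n(x,y)|^{2\gamma}\,dx\,dy\Big)^{\frac1{2\gamma}}}{\Big(\int_{\mathbb{R}^N\times(0,+\infty)}y^{1-2s}|\nabla U_n(x,y)|^2\,dx\,dy\Big)^{\frac12}}=+\infty.$$ *)

theory Defs
  imports "HOL-Analysis.Analysis"
begin

fun C_k_on :: "nat \<Rightarrow> 'a::euclidean_space set \<Rightarrow> ('a \<Rightarrow> real) \<Rightarrow> bool" where
  "C_k_on 0 S f = continuous_on S f"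
| "C_k_on (Suc k) S f = (continuous_on S f \<and> f differentiable_on S \<and>
     (\<forall>b\<in>Basis. C_k_on k S (\<lambda>x. frechet_derivative f (at x) b)))"

definition smooth_on :: "'a::euclidean_space set \<Rightarrow> ('a \<Rightarrow> real) \<Rightarrow> bool" where
  "smooth_on S f \<longleftrightarrow> (\<forall>k. C_k_on k S f)"

definition Cc_infty_01 :: "'a::euclidean_space set \<Rightarrow> ('a \<Rightarrow> real) \<Rightarrow> bool" where
  "Cc_infty_01 S f \<longleftrightarrow> smooth_on S f \<and> compact (closure {z. f z \<noteq> 0})
     \<and> closure {z. f z \<noteq> 0} \<subseteq> S \<and> (\<forall>z\<in>S. f z \<in> {0..1})"

definition grad :: "('a::euclidean_space \<Rightarrow> real) \<Rightarrow> 'a \<Rightarrow> 'a" where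
  "grad f z = (\<Sum>b\<in>Basis. frechet_derivative f (at z) b *\<^sub>R b)"

definition half_space :: "((real^'n) \<times> real) set" where
  "half_space = {z. snd z > 0}"

end

theory Submission
  imports Defs "HOL-Computational_Algebra.Polynomial"
begin


lemma C_k_cong:
  assumes "open S" "\<And>x. x \<in> S \<Longrightarrow> f x = g x"
  shows "C_k_on k S f = C_k_on k S g"
  using assms(2)
proof (induction k arbitrary: f g)
  case 0
  then show ?case using continuous_on_cong by force
next
  case (Suc k)
  have hd: "(f has_derivative D) (at x) \<longleftrightarrow> (g has_derivative D) (at x)" if "x \<in> S" for x D
    using has_derivative_transform_within_open[OF _ assms(1) that, of f D UNIV g]
      has_derivative_transform_within_open[OF _ assms(1) that, of g D UNIV f] Suc.prems
    by auto
  have fd: "frechet_derivative f (at x) = frechet_derivative g (at x)" if "x \<in> S" for x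
    unfolding frechet_derivative_def using hd[OF that] by simp
  have "f differentiable_on S \<longleftrightarrow> g differentiable_on S"
    using hd assms(1) by (auto simp: differentiable_on_eq_differentiable_at differentiable_def)
  moreover have "continuous_on S f \<longleftrightarrow> continuous_on S g"
    using Suc.prems continuous_on_cong by force
  moreover have "C_k_on k S (\<lambda>x. frechet_derivative f (at x) b) = C_k_on k S (\<lambda>x. frechet_derivative g (at x) b)" for b
    using Suc.IH[of "\<lambda>x. frechet_derivative f (at x) b" "\<lambda>x. frechet_derivative g (at x) b"] fd by auto
  ultimately show ?case by simp
qed

lemma C_k_SucI:
  assumes "open S" "\<And>x. x \<in> S \<Longrightarrow> (f has_derivative f' x) (at x)"
    "\<And>b. b \<in> Basis \<Longrightarrow> C_k_on k S (\<lambda>x. f' x b)"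
  shows "C_k_on (Suc k) S f"
proof -
  have "continuous_on S f"
    using assms(2) has_derivative_continuous continuous_at_imp_continuous_on by blast
  moreover have "f differentiable_on S"
    using assms(2) differentiableI differentiable_at_imp_differentiable_on by blast
  moreover have "C_k_on k S (\<lambda>x. frechet_derivative f (at x) b)" if "b \<in> Basis" for b
  proof -
    have "C_k_on k S (\<lambda>x. frechet_derivative f (at x) b) = C_k_on k S (\<lambda>x. f' x b)"
      by (rule C_k_cong[OF assms(1)]) (simp add: frechet_derivative_at[OF assms(2), symmetric])
    then show ?thesis using assms(3)[OF that] by simp
  qed
  ultimately show ?thesis by simp
qed

lemma C_k_SucD:
  assumes "open S" "C_k_on (Suc k) S f" "x \<in> S"
  shows "(f has_derivative frechet_derivative f (at x)) (at x)"
  using assms by (auto simp: differentiable_on_eq_differentiable_at frechet_derivative_works[symmetric])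

lemma C_k_mono: "C_k_on (Suc k) S f \<Longrightarrow> C_k_on k S f"
  by (induction k arbitrary: f) auto

lemma C_k_const: "open S \<Longrightarrow> C_k_on k S (\<lambda>x. c)"
proof (induction k arbitrary: c)
  case 0 then show ?case by simp
next
  case (Suc k)
  show ?case
    by (rule C_k_SucI[where f'="\<lambda>x h. 0"]) (use Suc in auto)
qed

lemma C_k_add: "open S \<Longrightarrow> C_k_on k S f \<Longrightarrow> C_k_on k S g \<Longrightarrow> C_k_on k S (\<lambda>x. f x + g x)"
proof (induction k arbitrary: f g)
  case 0 then show ?case by (auto intro: continuous_on_add)
next
  case (Suc k)
  show ?case
    apply (rule C_k_SucI[where f'="\<lambda>x h. frechet_derivative f (at x) h + frechet_derivative g (at x) h"])
    using Suc C_k_SucD[OF Suc.prems(1)] by (auto intro: has_derivative_add)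
qed

lemma C_k_mult: "open S \<Longrightarrow> C_k_on k S f \<Longrightarrow> C_k_on k S g \<Longrightarrow> C_k_on k S (\<lambda>x. f x * g x)"
proof (induction k arbitrary: f g)
  case 0 then show ?case by (auto intro: continuous_on_mult)
next
  case (Suc k)
  show ?case
    apply (rule C_k_SucI[where f'="\<lambda>x h. f x * frechet_derivative g (at x) h + frechet_derivative f (at x) h * g x"])
    apply (rule Suc.prems(1))
    subgoal for x using has_derivative_mult[OF C_k_SucD[OF Suc.prems(1) Suc.prems(2)] C_k_SucD[OF Suc.prems(1) Suc.prems(3)]] by blast
    apply (rule C_k_add[OF Suc.prems(1)])
     apply (rule Suc.IH) using Suc.prems C_k_mono apply auto[3]
    apply (rule Suc.IH) using Suc.prems C_k_mono apply auto
    done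
qed

lemma C_k_compose:
  fixes g :: "real \<Rightarrow> real"
  assumes "open S"
  shows "(\<And>k. C_k_on k UNIV g) \<Longrightarrow> C_k_on k S f \<Longrightarrow> C_k_on k S (\<lambda>x. g (f x))"
proof (induction k arbitrary: f g)
  case 0
  have "continuous_on UNIV g" using "0.prems"(1)[of 0] by simp
  then show ?case
    using "0.prems"(2) continuous_on_compose2[of UNIV g S f] by auto
next
  case (Suc k)
  define g' where "g' = (\<lambda>t. frechet_derivative g (at t) 1)"
  have gd: "(g has_derivative frechet_derivative g (at t)) (at t)" for t
    using C_k_SucD[of UNIV 0 g t] Suc.prems(1) by auto
  have lin: "frechet_derivative g (at t) c = c * g' t" for t c
  proof -
    have "linear (frechet_derivative g (at t))" using gd has_derivative_linear by blast
    then have "frechet_derivative g (at t) (c *\<^sub>R 1) = c *\<^sub>R frechet_derivative g (at t) 1"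
      using linear_scale by blast
    then show ?thesis by (simp add: g'_def)
  qed
  have g'k: "C_k_on k UNIV g'" for k
    using Suc.prems(1)[of "Suc k"] by (simp add: g'_def)
  show ?case
    apply (rule C_k_SucI[where f'="\<lambda>x h. frechet_derivative f (at x) h * g' (f x)"])
    using assms apply simp
    subgoal for x
      using diff_chain_at[OF C_k_SucD[OF assms Suc.prems(2)] gd[of "f x"]]
      by (simp add: o_def lin)
    apply (rule C_k_mult[OF assms])
    using Suc.prems apply simp
    apply (rule Suc.IH[OF g'k])
    using Suc.prems C_k_mono by blast
qed



definition H :: "real poly \<Rightarrow> real \<Rightarrow> real" where
  "H P t = (if 0 < t then poly P (inverse t) * exp (- inverse t) else 0)"

definition dP :: "real poly \<Rightarrow> real poly" where
  "dP P = pCons 0 (pCons 0 (P - pderiv P))"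

lemma poly_exp_decay:
  fixes R :: "real poly"
  shows "((\<lambda>x. poly R x * exp (-x)) \<longlongrightarrow> 0) at_top"
proof -
  have eq: "poly R x * exp (-x) = (\<Sum>i\<le>degree R. coeff R i * (x^i / exp x))" for x :: real
  proof -
    have "poly R x * exp (-x) = poly R x / exp x" by (simp add: exp_minus field_simps)
    also have "\<dots> = (\<Sum>i\<le>degree R. coeff R i * (x^i / exp x))" by (simp add: poly_altdef sum_divide_distrib)
    finally show ?thesis .
  qed
  have "((\<lambda>x. \<Sum>i\<le>degree R. coeff R i * (x^i / exp x)) \<longlongrightarrow> (\<Sum>i\<le>degree R. coeff R i * 0)) at_top"
    by (intro tendsto_intros tendsto_power_div_exp_0)
  then show ?thesis by (simp add: eq)
qed

lemma H_deriv: "(H P has_real_derivative H (dP P) t) (at t)"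
proof (cases "t > 0")
  case True
  have d1: "((\<lambda>t. poly P (inverse t)) has_real_derivative poly (pderiv P) (inverse t) * (- (inverse t ^ Suc (Suc 0)))) (at t)"
    using True by (intro DERIV_chain2[OF poly_DERIV DERIV_inverse]) simp
  have d2: "((\<lambda>t. exp (- inverse t)) has_real_derivative exp (- inverse t) * (- (- (inverse t ^ Suc (Suc 0))))) (at t)"
    using True by (intro DERIV_chain2[OF DERIV_exp DERIV_minus[OF DERIV_inverse]]) simp
  have d3: "((\<lambda>t. poly P (inverse t) * exp (- inverse t)) has_real_derivative H (dP P) t) (at t)"
    using DERIV_mult[OF d1 d2] True
    by (simp add: H_def dP_def algebra_simps power2_eq_square)
  show ?thesis
    using has_field_derivative_transform_within_open[OF d3 open_greaterThan[of "0::real"], of "H P"] True by (auto simp: H_def)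
next
  case False
  show ?thesis
  proof (cases "t < 0")
    case True
    have z: "((\<lambda>t. 0) has_real_derivative 0) (at t)" by simp
    have "(H P has_real_derivative 0) (at t)"
      using has_field_derivative_transform_within_open[OF z open_lessThan[of "0::real"], of "H P"] True by (auto simp: H_def)
    then show ?thesis using True by (simp add: H_def)
  next
    case False
    then have t0: "t = 0" using \<open>\<not> t > 0\<close> by simp
    have L: "((\<lambda>y. H P y / y) \<longlongrightarrow> 0) (at_left 0)"
    proof -
      have "eventually (\<lambda>y. y \<in> {-1<..<0::real}) (at_left 0)"
        by (rule eventually_at_left_real) simp
      then have "eventually (\<lambda>y. H P y / y = 0) (at_left 0)"
        by eventually_elim (auto simp: H_def field_simps)
      then show ?thesis using tendsto_cong[of "\<lambda>y. H P y / y" "\<lambda>y. 0" "at_left 0" 0] by simp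
    qed
    have R: "((\<lambda>y. H P y / y) \<longlongrightarrow> 0) (at_right 0)"
      unfolding filterlim_at_right_to_top
    proof -
      have ev: "eventually (\<lambda>x. poly (pCons 0 P) x * exp (-x) = H P (inverse x) / inverse x) at_top"
        using eventually_gt_at_top[of 0]
        by eventually_elim (auto simp: H_def field_simps)
      show "((\<lambda>x. H P (inverse x) / inverse x) \<longlongrightarrow> 0) at_top"
        using tendsto_cong[OF ev, of 0] poly_exp_decay[of "pCons 0 P"] by blast
    qed
    have H0: "H P 0 = 0" "H (dP P) 0 = 0" by (simp_all add: H_def)
    have "((\<lambda>y. (H P y - H P 0) / (y - 0)) \<longlongrightarrow> 0) (at 0)"
      using filterlim_split_at[OF L R] by (simp add: H0)
    then have "(H P has_real_derivative 0) (at 0)" by (simp add: has_field_derivative_iff)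
    then show ?thesis using t0 H0 by simp
  qed
qed

lemma H_smooth: "C_k_on k UNIV (H P)"
proof (induction k arbitrary: P)
  case 0
  have "continuous_on UNIV (H P)"
    by (intro continuous_at_imp_continuous_on ballI DERIV_continuous[OF H_deriv])
  then show ?case by simp
next
  case (Suc k)
  show ?case
    apply (rule C_k_SucI[where f'="\<lambda>x h. H (dP P) x * h"])
      apply simp
    using H_deriv has_field_derivative_def apply metis
    using Suc.IH by (simp add: Basis_real_def)
qed

lemma H1: "H 1 t = (if 0 < t then exp (- inverse t) else 0)"
  by (simp add: H_def)

lemma H1_bounds: "0 \<le> H 1 t" "H 1 t \<le> 1"
  by (auto simp: H1)

lemma H1_pos: "0 < t \<Longrightarrow> 0 < H 1 t"
  by (simp add: H1)

lemma H1_mono: "0 < s \<Longrightarrow> s \<le> t \<Longrightarrow> H 1 s \<le> H 1 t"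
  by (simp add: H1 le_imp_inverse_le)

lemma H_dP1: "H (dP 1) t = (if 0 < t then (inverse t)^2 * exp (- inverse t) else 0)"
  by (simp add: H_def dP_def power2_eq_square)

lemma exp_sq_bound: "0 \<le> u \<Longrightarrow> u^2 * exp (- u) \<le> (4::real)"
proof -
  assume u: "0 \<le> u"
  have "u/2 \<le> exp (u/2)" using exp_ge_add_one_self[of "u/2"] by linarith
  then have "(u/2)^2 \<le> (exp (u/2))^2" using u by (intro power_mono) auto
  also have "(exp (u/2))^2 = exp u" by (simp add: exp_double[symmetric])
  finally have "u^2 \<le> 4 * exp u" by (simp add: power_divide)
  then show ?thesis by (simp add: exp_minus field_simps)
qed

lemma H_dP1_bounds: "0 \<le> H (dP 1) t" "H (dP 1) t \<le> 4"
  using exp_sq_bound[of "inverse t"] by (auto simp: H_dP1)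

lemma H_dP1_lower: "1/8 \<le> t \<Longrightarrow> t \<le> 1 \<Longrightarrow> exp (-8) \<le> H (dP 1) t"
proof -
  assume t: "1/8 \<le> t" "t \<le> 1"
  have u1: "1 \<le> inverse t" using t by (simp add: one_le_inverse_iff) 
  have u8: "inverse t \<le> 8" using t
    using le_imp_inverse_le[OF t(1)] by simp
  have "exp (-8) \<le> exp (- inverse t)" using u8 by simp
  also have "\<dots> \<le> (inverse t)^2 * exp (- inverse t)"
    using u1 by (simp add: one_le_power)
  finally show ?thesis using t by (simp add: H_dP1)
qed



definition z0 :: "(real^'n) \<times> real" where "z0 = (0, 1)"
definition cc :: "nat \<Rightarrow> real" where "cc n = (real n + 2)^2"
definition q :: "nat \<Rightarrow> (real^'n) \<times> real \<Rightarrow> real" where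
  "q n z = 1 - cc n * ((z - z0) \<bullet> (z - z0))"
definition UU :: "nat \<Rightarrow> (real^'n) \<times> real \<Rightarrow> real" where
  "UU n z = H 1 (q n z)"

lemma C_k_inner: "open S \<Longrightarrow> C_k_on k S (\<lambda>z. (z - w) \<bullet> b)"
proof (cases k)
  case 0 then show ?thesis by (simp add: continuous_intros)
next
  case (Suc k')
  assume S: "open S"
  show ?thesis unfolding Suc
    apply (rule C_k_SucI[OF S, where f'="\<lambda>z h. h \<bullet> b"])
    apply (auto intro!: derivative_eq_intros simp: C_k_const[OF S])
    done
qed

lemma q_deriv: "(q n has_derivative (\<lambda>h. - cc n * (2 * ((z - z0) \<bullet> h)))) (at z)"
  unfolding q_def
  by (auto intro!: derivative_eq_intros simp: inner_commute)

lemma C_k_q: "open S \<Longrightarrow> C_k_on k S (q n)"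
proof (cases k)
  case 0 then show ?thesis by (simp add: q_def continuous_intros)
next
  case (Suc k')
  assume S: "open S"
  show ?thesis unfolding Suc
    apply (rule C_k_SucI[OF S, where f'="\<lambda>z h. - cc n * (2 * ((z - z0) \<bullet> h))"])
     apply (rule q_deriv)
    apply (intro C_k_mult[OF S] C_k_const[OF S])
    using C_k_inner[OF S, of k' z0] by (simp add: inner_commute)
qed

lemma UU_smooth: "smooth_on half_space (UU n)"
proof -
  have "open (half_space :: ((real^'n) \<times> real) set)"
    unfolding half_space_def by (intro open_Collect_less continuous_intros)
  then show ?thesis
    unfolding smooth_on_def UU_def
    using C_k_compose[of half_space "H 1"] H_smooth C_k_q by blast
qed

lemma inner_self_norm: "(x::'a::real_inner) \<bullet> x = (norm x)^2"
  by (simp add: power2_norm_eq_inner)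

lemma q_pos_iff: "0 < q n z \<longleftrightarrow> z \<in> ball z0 (1 / (real n + 2))"
proof -
  have "0 < q n z \<longleftrightarrow> (real n + 2)^2 * (norm (z - z0))^2 < 1"
    by (simp add: q_def cc_def inner_self_norm)
  also have "\<dots> \<longleftrightarrow> ((real n + 2) * norm (z - z0))^2 < 1"
    by (simp add: power_mult_distrib)
  also have "\<dots> \<longleftrightarrow> (real n + 2) * norm (z - z0) < 1"
    by (simp add: abs_square_less_1)
  also have "\<dots> \<longleftrightarrow> norm (z - z0) < 1 / (real n + 2)"
    by (simp add: field_simps)
  finally show ?thesis by (simp add: dist_norm norm_minus_commute)
qed

lemma UU_support: "{z. UU n z \<noteq> 0} = ball z0 (1 / (real n + 2))"
  apply (rule set_eqI)
  subgoal for z using q_pos_iff[of n z] by (simp add: UU_def H1)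
  done

lemma snd_close: "z \<in> cball (z0::(real^'n) \<times> real) \<rho> \<Longrightarrow> \<bar>snd z - 1\<bar> \<le> \<rho>"
proof -
  assume "z \<in> cball z0 \<rho>"
  then have "norm (z - z0) \<le> \<rho>" by (simp add: dist_norm norm_minus_commute)
  moreover have "\<bar>snd z - 1\<bar> \<le> norm (z - z0)"
  proof -
    have "snd (z - z0) = snd z - 1" by (simp add: z0_def)
    moreover have "norm (snd (z - z0)) \<le> norm (z - z0)"
      using norm_snd_le[of "snd (z - z0)" "fst (z - z0)"] by (metis prod.collapse)
    ultimately show ?thesis by simp
  qed
  ultimately show ?thesis by linarith
qed

lemma UU_Cc: "Cc_infty_01 half_space (UU n)"
proof -
  have r: "0 < 1 / (real n + 2)" "1 / (real n + 2) \<le> 1/2" by (auto simp: field_simps)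
  have "cball z0 (1 / (real n + 2)) \<subseteq> half_space"
  proof
    fix z assume "z \<in> cball (z0::(real^'n) \<times> real) (1 / (real n + 2))"
    then have "\<bar>snd z - 1\<bar> \<le> 1 / (real n + 2)" by (rule snd_close)
    then have "- (snd z - 1) \<le> 1 / (real n + 2)" by (rule abs_le_D2)
    then have "0 < snd z" using r(2) by linarith
    then show "z \<in> half_space" by (simp add: half_space_def)
  qed
  then show ?thesis
    unfolding Cc_infty_01_def UU_support using r UU_smooth H1_bounds
    by (auto simp: UU_def)
qed



lemma UU_deriv: "(UU n has_derivative (\<lambda>h. H (dP 1) (q n z) * (- cc n * (2 * ((z - z0) \<bullet> h))))) (at z)"
proof -
  have "(H 1 has_derivative (\<lambda>x. H (dP 1) (q n z) * x)) (at (q n z))"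
    using H_deriv[of 1 "q n z"] by (simp add: has_field_derivative_def)
  from diff_chain_at[OF q_deriv this] show ?thesis
    by (simp add: o_def UU_def[abs_def])
qed

lemma grad_UU: "grad (UU n) z = (H (dP 1) (q n z) * (- cc n * 2)) *\<^sub>R (z - z0)"
proof -
  let ?K = "H (dP 1) (q n z) * (- cc n * 2)"
  have "grad (UU n) z = (\<Sum>b\<in>Basis. (?K * ((z - z0) \<bullet> b)) *\<^sub>R b)"
    unfolding grad_def frechet_derivative_at[OF UU_deriv, symmetric] by (simp add: algebra_simps)
  also have "\<dots> = ?K *\<^sub>R (\<Sum>b\<in>Basis. ((z - z0) \<bullet> b) *\<^sub>R b)"
    by (simp add: scaleR_sum_right)
  also have "\<dots> = ?K *\<^sub>R (z - z0)" by (simp add: euclidean_representation)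
  finally show ?thesis .
qed

lemma cc_pos: "0 < cc n" by (simp add: cc_def)

lemma norm_grad_UU: "norm (grad (UU n) z) = H (dP 1) (q n z) * (2 * cc n) * norm (z - z0)"
  using H_dP1_bounds(1)[of "q n z"] cc_pos[of n] by (simp add: grad_UU abs_mult)

lemma q_eq: "q n z = 1 - ((real n + 2) * norm (z - z0))^2"
  by (simp add: q_def cc_def inner_self_norm power_mult_distrib)

lemma cont_UU: "continuous_on S (UU n)"
proof -
  have "continuous_on UNIV (H 1)" using H_smooth[of 0 1] by simp
  moreover have "continuous_on S (q n)" by (simp add: q_def continuous_intros)
  ultimately show ?thesis unfolding UU_def[abs_def]
    using continuous_on_compose2[of UNIV "H 1" S "q n"] by auto
qed

lemma cont_HdP: "continuous_on S (\<lambda>z. H (dP 1) (q n z))"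
proof -
  have "continuous_on UNIV (H (dP 1))" using H_smooth[of 0 "dP 1"] by simp
  moreover have "continuous_on S (q n)" by (simp add: q_def continuous_intros)
  ultimately show ?thesis
    using continuous_on_compose2[of UNIV "H (dP 1)" S "q n"] by auto
qed

lemma cont_snd_powr:
  assumes "\<forall>z\<in>S. 0 < snd z"
  shows "continuous_on S (\<lambda>z::(real^'n) \<times> real. snd z powr a)"
  using assms by (intro continuous_on_powr' continuous_intros) auto

lemma cont_F:
  assumes "\<forall>z\<in>S. 0 < snd z" "0 < p"
  shows "continuous_on S (\<lambda>z::(real^'n) \<times> real. snd z powr a * \<bar>UU n z\<bar> powr p)"
proof -
  have c1: "continuous_on S (\<lambda>z::(real^'n) \<times> real. snd z powr a)" by (rule cont_snd_powr[OF assms(1)])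
  have c0: "continuous_on S (\<lambda>z. \<bar>UU n z\<bar>)" by (intro continuous_intros cont_UU)
  have c2: "continuous_on S (\<lambda>z. \<bar>UU n z\<bar> powr p)"
    using continuous_on_powr'[OF c0 continuous_on_const[of S p]] assms(2) by simp
  show ?thesis using continuous_on_mult[OF c1 c2] .
qed

lemma cont_G:
  assumes "\<forall>z\<in>S. 0 < snd z"
  shows "continuous_on S (\<lambda>z::(real^'n) \<times> real. snd z powr a * (norm (grad (UU n) z))\<^sup>2)"
  unfolding norm_grad_UU
  by (intro continuous_intros cont_snd_powr[OF assms(1)] cont_HdP)

lemma ind_swap:
  assumes "B \<subseteq> A" "\<And>z. z \<notin> B \<Longrightarrow> F z = (0::real)"
  shows "indicator A z *\<^sub>R F z = indicator B z *\<^sub>R F z"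
  using assms by (cases "z \<in> B") (auto simp: indicator_def)

lemma integral_ind_const:
  fixes S :: "'a::euclidean_space set"
  assumes "compact S"
  shows "(\<integral>z. indicator S z *\<^sub>R (m::real) \<partial>lborel) = measure lborel S * m"
proof -
  have "integrable lborel (\<lambda>z. indicator S z *\<^sub>R (1::real))"
    using borel_integrable_compact[OF assms, of "\<lambda>_. 1::real"] by simp
  then have "integrable lborel (indicator S :: 'a \<Rightarrow> real)" by simp
  then show ?thesis by simp
qed

lemma DIM_space: "DIM((real^'n) \<times> real) = CARD('n) + 1"
  by simp

lemma content_cball_z0:
  assumes "0 \<le> \<rho>"
  shows "measure lborel (cball (c::(real^'n) \<times> real) \<rho>) = \<rho> ^ (CARD('n) + 1) * measure lborel (ball (0::(real^'n) \<times> real) 1)"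
  using content_ball_conv_unit_ball[OF assms, of c] by (simp add: content_cball_conv_ball)



lemma powr_at_top_pos:
  assumes "(e::real) > 0"
  shows "filterlim (\<lambda>x. x powr e) at_top at_top"
proof -
  have f: "filterlim (\<lambda>x. exp (e * ln x)) at_top at_top"
    by (rule filterlim_compose[OF exp_at_top filterlim_tendsto_pos_mult_at_top[OF tendsto_const]])
       (simp_all add: ln_at_top assms)
  have ev: "eventually (\<lambda>x. exp (e * ln x) = x powr e) at_top"
    using eventually_gt_at_top[of 0] by eventually_elim (simp add: powr_def)
  show ?thesis using filterlim_cong[OF refl refl ev] f by simp
qed

lemma seq_powr_at_top:
  assumes "(e::real) > 0" "A > 0"
  shows "filterlim (\<lambda>n. A * (real n + 2) powr e) at_top sequentially"
proof -
  have f1: "filterlim (\<lambda>n. real n powr e) at_top sequentially"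
    by (rule filterlim_compose[OF powr_at_top_pos[OF assms(1)] filterlim_real_sequentially])
  have "filterlim (\<lambda>n. (real n + 2) powr e) at_top sequentially"
    by (rule filterlim_at_top_mono[OF f1], rule always_eventually) (auto intro!: powr_mono2 simp: less_imp_le assms(1))
  then show ?thesis
    by (rule filterlim_tendsto_pos_mult_at_top[OF tendsto_const assms(2)])
qed

lemma ratio_bound:
  fixes \<alpha> \<beta> t p D Nv Gv :: real
  assumes "0 < \<alpha>" "0 < \<beta>" "0 < t" "0 < p"
    and "\<alpha> * t powr (-D) \<le> Nv" "0 < Gv" "Gv \<le> \<beta> * t powr (2 - D)"
  shows "(\<alpha> powr (1/p) / \<beta> powr (1/2)) * t powr ((D - 2)/2 - D/p) \<le> Nv powr (1/p) / Gv powr (1/2)"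
proof -
  have h1: "(\<alpha> * t powr (-D)) powr (1/p) \<le> Nv powr (1/p)"
    using assms by (intro powr_mono2) auto
  have e1: "(\<alpha> * t powr (-D)) powr (1/p) = \<alpha> powr (1/p) * t powr (-D/p)"
    using assms by (simp add: powr_mult powr_powr)
  have h2: "Gv powr (1/2) \<le> (\<beta> * t powr (2 - D)) powr (1/2)"
    using assms by (intro powr_mono2) auto
  have e2: "(\<beta> * t powr (2 - D)) powr (1/2) = \<beta> powr (1/2) * t powr ((2 - D)/2)"
    using assms by (simp add: powr_mult powr_powr)
  have g0: "0 < Gv powr (1/2)" using assms by simp
  have le: "(\<alpha> powr (1/p) * t powr (-D/p)) / (\<beta> powr (1/2) * t powr ((2 - D)/2))
        \<le> Nv powr (1/p) / Gv powr (1/2)"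
    using h1 h2 e1 e2 g0 assms by (intro frac_le) auto
  have tt: "t powr ((D - 2)/2 - D/p) = t powr (-D/p) / t powr ((2 - D)/2)"
    by (simp add: powr_diff[symmetric] field_simps)
  have eq: "(\<alpha> powr (1/p) / \<beta> powr (1/2)) * t powr ((D - 2)/2 - D/p)
       = (\<alpha> powr (1/p) * t powr (-D/p)) / (\<beta> powr (1/2) * t powr ((2 - D)/2))"
    unfolding tt by simp
  show ?thesis unfolding eq by (rule le)
qed

lemma in_cball_z0: "z \<in> cball z0 \<rho> \<longleftrightarrow> norm (z - z0) \<le> \<rho>"
  by (simp add: dist_norm norm_minus_commute)

lemma tpos: "0 < real n + 2" by simp

lemma snd_bounds:
  assumes "z \<in> cball (z0::(real^'n) \<times> real) (1 / (real n + 2))"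
  shows "1/2 \<le> snd z" "snd z \<le> 2"
proof -
  have a: "\<bar>snd z - 1\<bar> \<le> 1 / (real n + 2)" using snd_close[OF assms] .
  have b: "1 / (real n + 2) \<le> 1/2" by (simp add: field_simps)
  have "snd z - 1 \<le> 1 / (real n + 2)" "- (snd z - 1) \<le> 1 / (real n + 2)"
    using abs_le_D1[OF a] abs_le_D2[OF a] by auto
  then show "1/2 \<le> snd z" "snd z \<le> 2" using b by linarith+
qed


lemma scaled_le: "0 < t \<Longrightarrow> d \<le> k / t \<Longrightarrow> t * d \<le> (k::real)"
  by (simp add: pos_le_divide_eq mult.commute)

lemma scaled_ge: "0 < t \<Longrightarrow> k / t \<le> d \<Longrightarrow> k \<le> t * (d::real)"
  by (simp add: pos_divide_le_eq mult.commute)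

lemma N_lower:
  fixes a p :: real and n :: nat
  assumes "a \<le> 0" "0 < p"
  defines "t \<equiv> real n + 2"
  shows "measure lborel (cball (z0::(real^'n) \<times> real) (1/(2*t))) * (2 powr a * H 1 (3/4) powr p)
    \<le> (\<integral>z. indicator (cball (z0::(real^'n) \<times> real) (1/t)) z *\<^sub>R (snd z powr a * \<bar>UU n z\<bar> powr p) \<partial>lborel)"
proof -
  have t: "0 < t" by (simp add: t_def)
  let ?B = "cball (z0::(real^'n) \<times> real) (1/t)"
  let ?B2 = "cball (z0::(real^'n) \<times> real) (1/(2*t))"
  have B2B: "?B2 \<subseteq> ?B" using t by (intro subset_cball) (simp add: field_simps)
  have sndpos: "\<forall>z\<in>?B. 0 < snd z" using snd_bounds(1)[of _ n] by (force simp: t_def)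
  have int1: "integrable lborel (\<lambda>z. indicator ?B z *\<^sub>R (snd z powr a * \<bar>UU n z\<bar> powr p))"
    by (rule borel_integrable_compact[OF compact_cball cont_F[OF sndpos assms(2)]])
  have int2: "integrable lborel (\<lambda>z. indicator ?B2 z *\<^sub>R (2 powr a * H 1 (3/4) powr p))"
    by (rule borel_integrable_compact[OF compact_cball continuous_on_const])
  have "measure lborel ?B2 * (2 powr a * H 1 (3/4) powr p) = (\<integral>z. indicator ?B2 z *\<^sub>R (2 powr a * H 1 (3/4) powr p) \<partial>lborel)"
    by (rule integral_ind_const[OF compact_cball, symmetric])
  also have "(\<integral>z. indicator ?B2 z *\<^sub>R (2 powr a * H 1 (3/4) powr p) \<partial>lborel)
     \<le> (\<integral>z. indicator ?B z *\<^sub>R (snd z powr a * \<bar>UU n z\<bar> powr p) \<partial>lborel)"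
  proof (rule integral_mono[OF int2 int1])
    fix z :: "(real^'n) \<times> real"
    show "indicator ?B2 z *\<^sub>R (2 powr a * H 1 (3/4) powr p) \<le> indicator ?B z *\<^sub>R (snd z powr a * \<bar>UU n z\<bar> powr p)"
    proof (cases "z \<in> ?B2")
      case True
      then have zB: "z \<in> ?B" using B2B by blast
      have sb: "0 < snd z" "snd z \<le> 2" using snd_bounds[of z n] zB by (auto simp: t_def)
      have d: "t * norm (z - z0) \<le> 1/2"
      proof -
        have "norm (z - z0) \<le> (1/2) / t" using True[unfolded in_cball_z0] by simp
        then show ?thesis using t by (intro scaled_le) auto
      qed
      have "0 \<le> t * norm (z - z0)" using t by simp
      then have "(t * norm (z - z0))^2 \<le> (1/2)^2"
        using d by (intro power_mono) auto
      then have q34: "3/4 \<le> q n z" by (simp add: q_eq t_def[symmetric] power_divide)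
      have "H 1 (3/4) \<le> \<bar>UU n z\<bar>" using H1_mono[OF _ q34] H1_bounds(1) by (simp add: UU_def)
      then have "H 1 (3/4) powr p \<le> \<bar>UU n z\<bar> powr p"
        using assms(2) H1_bounds(1) by (intro powr_mono2) auto
      moreover have "2 powr a \<le> snd z powr a" using powr_mono2'[OF assms(1) sb] .
      ultimately have "2 powr a * H 1 (3/4) powr p \<le> snd z powr a * \<bar>UU n z\<bar> powr p"
        by (intro mult_mono) auto
      then show ?thesis using True zB by simp
    next
      case False
      then show ?thesis by (simp add: indicator_def)
    qed
  qed
  finally show ?thesis .
qed

lemma G_upper:
  fixes a :: real and n :: nat
  assumes "a \<le> 0"
  defines "t \<equiv> real n + 2"
  shows "(\<integral>z. indicator (cball (z0::(real^'n) \<times> real) (1/t)) z *\<^sub>R (snd z powr a * (norm (grad (UU n) z))\<^sup>2) \<partial>lborel)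
    \<le> measure lborel (cball (z0::(real^'n) \<times> real) (1/t)) * ((1/2) powr a * (8 * t)^2)"
proof -
  have t: "0 < t" by (simp add: t_def)
  let ?B = "cball (z0::(real^'n) \<times> real) (1/t)"
  have sndpos: "\<forall>z\<in>?B. 0 < snd z" using snd_bounds(1)[of _ n] by (force simp: t_def)
  have int1: "integrable lborel (\<lambda>z. indicator ?B z *\<^sub>R (snd z powr a * (norm (grad (UU n) z))\<^sup>2))"
    by (rule borel_integrable_compact[OF compact_cball cont_G[OF sndpos]])
  have int2: "integrable lborel (\<lambda>z. indicator ?B z *\<^sub>R ((1/2) powr a * (8 * t)^2))"
    by (rule borel_integrable_compact[OF compact_cball continuous_on_const])
  have "(\<integral>z. indicator ?B z *\<^sub>R (snd z powr a * (norm (grad (UU n) z))\<^sup>2) \<partial>lborel)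
     \<le> (\<integral>z. indicator ?B z *\<^sub>R ((1/2) powr a * (8 * t)^2) \<partial>lborel)" (is "_ \<le> ?R")
  proof (rule integral_mono[OF int1 int2])
    fix z :: "(real^'n) \<times> real"
    show "indicator ?B z *\<^sub>R (snd z powr a * (norm (grad (UU n) z))\<^sup>2) \<le> indicator ?B z *\<^sub>R ((1/2) powr a * (8 * t)^2)"
    proof (cases "z \<in> ?B")
      case True
      have sb: "1/2 \<le> snd z" using snd_bounds[of z n] True by (auto simp: t_def)
      have d: "t * norm (z - z0) \<le> 1"
        using True[unfolded in_cball_z0] t by (intro scaled_le) auto
      have ng: "norm (grad (UU n) z) = H (dP 1) (q n z) * (2 * t) * (t * norm (z - z0))"
        by (simp add: norm_grad_UU cc_def t_def power2_eq_square)
      have "norm (grad (UU n) z) \<le> 4 * (2 * t) * 1"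
        unfolding ng using H_dP1_bounds[of "q n z"] d t
        by (intro mult_mono) auto
      then have "(norm (grad (UU n) z))^2 \<le> (8 * t)^2"
        by (intro power_mono) auto
      moreover have "snd z powr a \<le> (1/2) powr a" using powr_mono2'[OF assms(1) _ sb] by simp
      ultimately have "snd z powr a * (norm (grad (UU n) z))\<^sup>2 \<le> (1/2) powr a * (8 * t)^2"
        by (intro mult_mono) auto
      then show ?thesis using True by simp
    next
      case False
      then show ?thesis by (simp add: indicator_def)
    qed
  qed
  also have "?R = measure lborel ?B * ((1/2) powr a * (8 * t)^2)"
    by (rule integral_ind_const[OF compact_cball])
  finally show ?thesis .
qed



lemma G_pos:
  fixes a :: real and n :: nat
  assumes "a \<le> 0"
  defines "t \<equiv> real n + 2"
  shows "0 < (\<integral>z. indicator (cball (z0::(real^'n) \<times> real) (1/t)) z *\<^sub>R (snd z powr a * (norm (grad (UU n) z))\<^sup>2) \<partial>lborel)"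
proof -
  have t: "0 < t" by (simp add: t_def)
  define w :: "(real^'n) \<times> real" where "w = (0, 1 + 1/(2*t))"
  let ?B = "cball (z0::(real^'n) \<times> real) (1/t)"
  let ?S = "cball w (1/(8*t))"
  define m2 where "m2 = 2 powr a * (exp (-8) * (3/4) * t)^2"
  have m2: "0 < m2" using t by (simp add: m2_def)
  have wz: "norm (w - z0) = 1/(2*t)" using t by (simp add: w_def z0_def norm_Pair)
  have sndpos: "\<forall>z\<in>?B. 0 < snd z" using snd_bounds(1)[of _ n] by (force simp: t_def)
  have int1: "integrable lborel (\<lambda>z. indicator ?B z *\<^sub>R (snd z powr a * (norm (grad (UU n) z))\<^sup>2))"
    by (rule borel_integrable_compact[OF compact_cball cont_G[OF sndpos]])
  have int2: "integrable lborel (\<lambda>z. indicator ?S z *\<^sub>R m2)"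
    by (rule borel_integrable_compact[OF compact_cball continuous_on_const])
  have "measure lborel ?S = (1/(8*t)) ^ (CARD('n) + 1) * measure lborel (ball (0::(real^'n) \<times> real) 1)"
    using t by (intro content_cball_z0) simp
  moreover have "0 < measure lborel (ball (0::(real^'n) \<times> real) 1)" by (rule content_ball_pos) simp
  ultimately have "0 < measure lborel ?S" using t by simp
  then have "0 < measure lborel ?S * m2" using m2 by simp
  also have "measure lborel ?S * m2 = (\<integral>z. indicator ?S z *\<^sub>R m2 \<partial>lborel)"
    by (rule integral_ind_const[OF compact_cball, symmetric])
  also have "\<dots> \<le> (\<integral>z. indicator ?B z *\<^sub>R (snd z powr a * (norm (grad (UU n) z))\<^sup>2) \<partial>lborel)"
  proof (rule integral_mono[OF int2 int1])
    fix z :: "(real^'n) \<times> real"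
    show "indicator ?S z *\<^sub>R m2 \<le> indicator ?B z *\<^sub>R (snd z powr a * (norm (grad (UU n) z))\<^sup>2)"
    proof (cases "z \<in> ?S")
      case True
      have zw: "norm (z - w) \<le> 1/(8*t)" using True by (simp add: dist_norm norm_minus_commute)
      have up: "norm (z - z0) \<le> (5/8)/t"
      proof -
        have "norm (z - z0) \<le> norm (z - w) + norm (w - z0)"
          using norm_triangle_ineq[of "z - w" "w - z0"] by simp
        moreover have "1/(8*t) + 1/(2*t) = (5/8)/t" using t by (simp add: field_simps)
        ultimately show ?thesis using zw wz by linarith
      qed
      have lo: "(3/8)/t \<le> norm (z - z0)"
      proof -
        have "norm (w - z0) \<le> norm (w - z) + norm (z - z0)"
          using norm_triangle_ineq[of "w - z" "z - z0"] by simp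
        moreover have "norm (w - z) = norm (z - w)" by (rule norm_minus_commute)
        moreover have "1/(2*t) - 1/(8*t) = (3/8)/t" using t by (simp add: field_simps)
        ultimately show ?thesis using zw wz by linarith
      qed
      have u1: "t * norm (z - z0) \<le> 5/8" by (rule scaled_le[OF t up])
      have u0: "3/8 \<le> t * norm (z - z0)" by (rule scaled_ge[OF t lo])
      have zB: "z \<in> ?B"
      proof -
        have "(5/8)/t \<le> 1/t" using t by (simp add: field_simps)
        then show ?thesis unfolding in_cball_z0 using up by linarith
      qed
      have sb: "0 < snd z" "snd z \<le> 2" using snd_bounds[of z n] zB by (auto simp: t_def)
      have sq1: "(t * norm (z - z0))^2 \<le> (5/8)^2" using u1 u0 by (intro power_mono) auto
      have sq0: "(3/8)^2 \<le> (t * norm (z - z0))^2" using u0 by (intro power_mono) auto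
      have qb: "1/8 \<le> q n z" "q n z \<le> 1"
        using sq1 sq0 by (simp_all add: q_eq t_def[symmetric] power_divide)
      have hq: "exp (-8) \<le> H (dP 1) (q n z)" by (rule H_dP1_lower[OF qb])
      have ng: "norm (grad (UU n) z) = H (dP 1) (q n z) * (2 * t) * (t * norm (z - z0))"
        by (simp add: norm_grad_UU cc_def t_def power2_eq_square)
      have "exp (-8) * (2 * t) * (3/8) \<le> norm (grad (UU n) z)"
        unfolding ng using hq u0 t H_dP1_bounds(1)[of "q n z"] by (intro mult_mono) auto
      then have "(exp (-8) * (3/4) * t)^2 \<le> (norm (grad (UU n) z))^2"
        using t by (intro power_mono) (auto simp: field_simps)
      moreover have "2 powr a \<le> snd z powr a" using powr_mono2'[OF assms(1) sb] .
      ultimately have "m2 \<le> snd z powr a * (norm (grad (UU n) z))\<^sup>2"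
        unfolding m2_def by (intro mult_mono) auto
      then show ?thesis using True zB by simp
    next
      case False
      then show ?thesis by (simp add: indicator_def)
    qed
  qed
  finally show ?thesis .
qed

lemma B_half:
  "cball (z0::(real^'n) \<times> real) (1/(real n + 2)) \<subseteq> half_space"
  using snd_bounds(1)[of _ n] by (force simp: half_space_def)

lemma N_eq:
  "set_lebesgue_integral lborel half_space (\<lambda>z::(real^'n) \<times> real. snd z powr a * \<bar>UU n z\<bar> powr p)
   = (\<integral>z. indicator (cball (z0::(real^'n) \<times> real) (1/(real n + 2))) z *\<^sub>R (snd z powr a * \<bar>UU n z\<bar> powr p) \<partial>lborel)"
proof -
  have "UU n z = 0" if "z \<notin> cball z0 (1/(real n + 2))" for z :: "(real^'n) \<times> real"
    using that UU_support[of n] ball_subset_cball by blast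
  then have "(\<lambda>z::(real^'n) \<times> real. indicator half_space z *\<^sub>R (snd z powr a * \<bar>UU n z\<bar> powr p))
     = (\<lambda>z. indicator (cball (z0::(real^'n) \<times> real) (1/(real n + 2))) z *\<^sub>R (snd z powr a * \<bar>UU n z\<bar> powr p))"
    by (intro ext ind_swap[OF B_half]) simp
  then show ?thesis unfolding set_lebesgue_integral_def by simp
qed

lemma G_eq:
  "set_lebesgue_integral lborel half_space (\<lambda>z::(real^'n) \<times> real. snd z powr a * (norm (grad (UU n) z))\<^sup>2)
   = (\<integral>z. indicator (cball (z0::(real^'n) \<times> real) (1/(real n + 2))) z *\<^sub>R (snd z powr a * (norm (grad (UU n) z))\<^sup>2) \<partial>lborel)"
proof -
  have "H (dP 1) (q n z) = 0" if "z \<notin> cball z0 (1/(real n + 2))" for z :: "(real^'n) \<times> real"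
  proof -
    have "z \<notin> ball z0 (1/(real n + 2))" using that ball_subset_cball by blast
    then have "\<not> 0 < q n z" using q_pos_iff by blast
    then show ?thesis by (simp add: H_dP1)
  qed
  then have "(\<lambda>z::(real^'n) \<times> real. indicator half_space z *\<^sub>R (snd z powr a * (norm (grad (UU n) z))\<^sup>2))
     = (\<lambda>z. indicator (cball (z0::(real^'n) \<times> real) (1/(real n + 2))) z *\<^sub>R (snd z powr a * (norm (grad (UU n) z))\<^sup>2))"
    by (intro ext ind_swap[OF B_half]) (simp add: norm_grad_UU)
  then show ?thesis unfolding set_lebesgue_integral_def by simp
qed



lemma main_gen:
  fixes a p :: real
  assumes "a \<le> 0" "0 < p" "0 < (real CARD('n) + 1 - 2)/2 - (real CARD('n) + 1)/p"
  shows "filterlim (\<lambda>n.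
       (set_lebesgue_integral lborel half_space (\<lambda>z::(real^'n) \<times> real. snd z powr a * \<bar>UU n z\<bar> powr p)) powr (1/p)
       / (set_lebesgue_integral lborel half_space (\<lambda>z::(real^'n) \<times> real. snd z powr a * (norm (grad (UU n) z))\<^sup>2)) powr (1/2))
      at_top sequentially"
proof -
  define k where "k = CARD('n) + 1"
  define D where "D = real CARD('n) + 1"
  define V where "V = measure lborel (ball (0::(real^'n) \<times> real) 1)"
  have V: "0 < V" unfolding V_def by (rule content_ball_pos) simp
  define m where "m = 2 powr a * H 1 (3/4) powr p"
  have m: "0 < m" using H1_pos[of "3/4"] by (simp add: m_def)
  define \<alpha> where "\<alpha> = (1/2)^k * V * m"
  define \<beta> where "\<beta> = V * ((1/2) powr a * 64)"
  have \<alpha>: "0 < \<alpha>" using V m by (simp add: \<alpha>_def)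
  have \<beta>: "0 < \<beta>" using V by (simp add: \<beta>_def)
  define e where "e = (D - 2)/2 - D/p"
  have e: "0 < e" using assms(3) by (simp add: e_def D_def)
  have A: "0 < \<alpha> powr (1/p) / \<beta> powr (1/2)" using \<alpha> \<beta> by simp
  show ?thesis
  proof (rule filterlim_at_top_mono[OF seq_powr_at_top[OF e A]], rule always_eventually, rule allI)
    fix n :: nat
    define t where "t = real n + 2"
    have t: "0 < t" by (simp add: t_def)
    have tD: "t powr D = t ^ k" using powr_realpow[OF t, of k] by (simp add: D_def k_def add.commute)
    define Nv where "Nv = set_lebesgue_integral lborel half_space (\<lambda>z::(real^'n) \<times> real. snd z powr a * \<bar>UU n z\<bar> powr p)"
    define Gv where "Gv = set_lebesgue_integral lborel half_space (\<lambda>z::(real^'n) \<times> real. snd z powr a * (norm (grad (UU n) z))\<^sup>2)"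
    have Nlow: "\<alpha> * t powr (-D) \<le> Nv"
    proof -
      have "measure lborel (cball (z0::(real^'n) \<times> real) (1/(2*t))) = (1/(2*t))^k * V"
        unfolding V_def k_def using t by (intro content_cball_z0) simp
      moreover have "(1/(2*t))^k * V * m = \<alpha> * t powr (-D)"
        using t by (simp add: \<alpha>_def powr_minus tD power_mult_distrib power_divide field_simps)
      moreover have "measure lborel (cball (z0::(real^'n) \<times> real) (1/(2*t))) * m \<le> Nv"
        unfolding Nv_def N_eq m_def t_def using N_lower[OF assms(1,2), of n] by simp
      ultimately show ?thesis by simp
    qed
    have Gup: "Gv \<le> \<beta> * t powr (2 - D)"
    proof -
      have M: "measure lborel (cball (z0::(real^'n) \<times> real) (1/t)) = (1/t)^k * V"
        unfolding V_def k_def using t by (intro content_cball_z0) simp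
      have P: "t powr (2 - D) = t^2 / t^k"
        using t by (simp add: powr_diff tD powr_numeral)
      have G1: "Gv \<le> measure lborel (cball (z0::(real^'n) \<times> real) (1/t)) * ((1/2) powr a * (8 * t)^2)"
        unfolding Gv_def G_eq t_def using G_upper[OF assms(1), of n] by simp
      have E: "measure lborel (cball (z0::(real^'n) \<times> real) (1/t)) * ((1/2) powr a * (8 * t)^2) = \<beta> * t powr (2 - D)"
        unfolding M P \<beta>_def using t by (simp add: power_one_over power_mult_distrib field_simps)
      show ?thesis using G1 E by simp
    qed
    have Gpos: "0 < Gv"
      unfolding Gv_def G_eq using G_pos[OF assms(1), of n] by simp
    have "(\<alpha> powr (1/p) / \<beta> powr (1/2)) * t powr ((D - 2)/2 - D/p) \<le> Nv powr (1/p) / Gv powr (1/2)"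
      by (rule ratio_bound[OF \<alpha> \<beta> t assms(2) Nlow Gpos Gup])
    then show "\<alpha> powr (1/p) / \<beta> powr (1/2) * (real n + 2) powr e
      \<le> Nv powr (1/p) / Gv powr (1/2)"
      by (simp add: e_def t_def)
  qed
qed

theorem lemmaA1:
  fixes s :: real
  assumes "CARD('n) \<ge> 2"
    and "1/2 < s" and "s < 1"
  shows "\<exists>U :: nat \<Rightarrow> (real^'n) \<times> real \<Rightarrow> real.
    (\<forall>n. Cc_infty_01 half_space (U n)) \<and>
    filterlim (\<lambda>n.
       (set_lebesgue_integral lborel half_space
          (\<lambda>z. snd z powr (1 - 2 * s) * abs (U n z) powr (2 * (1 + 2 / (real CARD('n) - 2 * s)))))
         powr (1 / (2 * (1 + 2 / (real CARD('n) - 2 * s))))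
       / (set_lebesgue_integral lborel half_space
          (\<lambda>z. snd z powr (1 - 2 * s) * (norm (grad (U n) z))\<^sup>2)) powr (1/2))
      at_top sequentially"
proof -
  define N where "N = real CARD('n)"
  have N2: "2 \<le> N" using assms(1) unfolding N_def by linarith
  have x: "0 < N - 2 * s" using N2 assms(3) by linarith
  have a: "1 - 2 * s \<le> 0" using assms(2) by linarith
  have p: "0 < 2 * (1 + 2 / (N - 2 * s))" using x by (intro mult_pos_pos add_pos_pos divide_pos_pos) auto
  have eq: "(N + 1 - 2)/2 - (N + 1)/(2 * (1 + 2 / (N - 2 * s))) = (2 * s - 1) / (N - 2 * s + 2)"
    using x by (simp add: field_simps)
  have "0 < (2 * s - 1) / (N - 2 * s + 2)" using x assms(2) by simp
  then have c: "0 < (N + 1 - 2)/2 - (N + 1)/(2 * (1 + 2 / (N - 2 * s)))" using eq by simp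
  show ?thesis
    apply (rule exI[of _ UU])
    apply (intro conjI allI UU_Cc)
    using main_gen[of "1 - 2 * s" "2 * (1 + 2 / (real CARD('n) - 2 * s))"] a p c
    unfolding N_def by simp
qed


end
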